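(* Suppose Assumption A and Assumption B (defined in the context) hold for the dynamic accuracy DFO algorithm described in the context, with criticality parameter $\epsilon>0$. Let $k_\epsilon$ be such that $\|\nabla f(\theta^k)\|\ge\epsilon$ for all $k=0,\ldots,k_\epsilon$ and $k_\epsilon+1$ is the first index $k$ with $\|\nabla f(\theta^k)\|<\epsilon$. Let $\mathcal{S}_\epsilon$ be the set of iterations $k\in\{0,\ldots,k_\epsilon\}$ which are successful, i.e. $\tilde\rho^k\ge\eta_2$, or $\tilde\rho^k\ge\eta_1$ and $m^k$ is fully linear in $B(\theta^k,\Delta^k)$. Then $$|\mathcal{S}_\epsilon|\le\frac{2(\kappa_{\rm eg}+1)f(\theta^0)}{(\eta_1-2\eta_1')\epsilon\Delta_{\min}}.$$
   Context: Setting. Let $n,d\ge 1$ and $r=(r_1,\ldots,r_n):\mathbb{R}^d\to\mathbb{R}^n$, with objective $f(\theta)=\frac1n\|r(\theta)\|^2=\frac1n\sum_{i=1}^n r_i(\theta)^2$ (Euclidean norm). In the application, $r_i(\theta)=\|\hat x_i(\theta)-x_i\|$ where $\hat x_i(\theta)$ is the minimizer of a lower-level problem that can only be computed approximately. The algorithm never sees $r$ exactly: for any $\theta$ it can compute an approximation $\tilde r(\theta)$ (in the application $\tilde r_i(\theta)=\|\tilde x_i(\theta)-x_i\|$ with $\tilde x_i(\theta)$ an approximate minimizer whose error can be made as small as desired), and sets $\tilde f(\theta)=\frac1n\|\tilde r(\theta)\|^2$. We say $\tilde f(\theta)$ is evaluated with accuracy $\delta$ if $|\tilde f(\theta)-f(\theta)|\le\delta$.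 Models. At iteration $k$ the algorithm holds an iterate $\theta^k$, a radius $\Delta^k>0$, and interpolation points $z^0=\theta^k,z^1,\ldots,z^d\in\mathbb{R}^d$ with $z^1-\theta^k,\ldots,z^d-\theta^k$ linearly independent; $J^k\in\mathbb{R}^{n\times d}$ is the unique matrix with $\tilde r(\theta^k)+J^k(z^t-\theta^k)=\tilde r(z^t)$ for $t=1,\ldots,d$. Set $M^k(s)=\tilde r(\theta^k)+J^k s$ and $m^k(s)=\frac1n\|M^k(s)\|^2=\tilde f(\theta^k)+(g^k)^Ts+\frac12 s^TH^ks$ with $g^k=\frac2n (J^k)^T\tilde r(\theta^k)$, $H^k=\frac2n(J^k)^TJ^k$. Fixed constants $\kappa_{\rm ef},\kappa_{\rm eg}>0$ (independent of $k,\theta^k,\Delta^k$) are given, and $m^k$ is called fully linear in $B(\theta^k,\Delta^k)$ if $|f(\theta^k+s)-m^k(s)|\le\kappa_{\rm ef}(\Delta^k)^2$ and $\|\nabla f(\theta^k+s)-\nabla m^k(s)\|\le\kappa_{\rm eg}\Delta^k$ for all $\|s\|\le\Delta^k$. The algorithm has a procedure which, by replacing interpolation points, makes the model fully linear in a given ball. Algorithm. Parameters: $\Delta_{\max}>0$, $0<\gamma_{\rm dec}<1<\gamma_{\rm inc}$, $0<\eta_1\le\eta_2<1$, $0<\eta_1'<\min(\eta_1,1-\eta_2)/2$, $\epsilon>0$; inputs $\theta^0\in\mathbb{R}^d$, $0<\Delta^0\le\Delta_{\max}$. Build an initial model $m^0$ from an arbitrary interpolation set. For $k=0,1,2,\ldots$: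 (1) [accuracy phase] repeat: (a) except on the first pass, re-evaluate $\tilde f(\theta^k)$ with accuracy $\delta^k\le\eta_1'[m^k(0)-m^k(s^k)]$ using the $s^k$ from the previous pass; (b) [criticality phase] if $\|g^k\|\le\epsilon$, replace $\Delta^k$ by $\gamma_{\rm dec}^i\Delta^k$ for $i=0,1,2,\ldots$ (making the model fully linear in the current ball) until $m^k$ is fully linear in $B(\theta^k,\Delta^k)$ and $\Delta^k\le\|g^k\|$; (c) compute $s^k$ with $\|s^k\|\le\Delta^k$ approximately minimizing $m^k$ over that ball; until $\tilde f(\theta^k)$ has been evaluated with accuracy $\delta^k\le\eta_1'[m^k(0)-m^k(s^k)]$. (2) Evaluate $\tilde f(\theta^k+s^k)$ with accuracy $\delta^k_+\le\eta_1'[m^k(0)-m^k(s^k)]$ and set $\tilde\rho^k=\frac{\tilde f(\theta^k)-\tilde f(\theta^k+s^k)}{m^k(0)-m^k(s^k)}$. (3) Set $\theta^{k+1}=\theta^k+s^k$ if $\tilde\rho^k\ge\eta_2$, or if $\tilde\rho^k\ge\eta_1$ and $m^k$ is fully linear in $B(\theta^k,\Delta^k)$; otherwise $\theta^{k+1}=\theta^k$. Set $\Delta^{k+1}=\min(\gamma_{\rm inc}\Delta^k,\Delta_{\max})$ if $\tilde\rho^k\ge\eta_2$; $\Delta^{k+1}=\Delta^k$ if $\tilde\rho^k<\eta_2$ and $m^k$ is not fully linear in $B(\theta^k,\Delta^k)$; $\Delta^{k+1}=\gamma_{\rm dec}\Delta^k$ otherwise. (4) If $\theta^{k+1}=\theta^k+s^k$,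 form $m^{k+1}$ by adding $\theta^{k+1}$ to the interpolation set (removing an existing point); otherwise set $m^{k+1}=m^k$ if $m^k$ is fully linear in $B(\theta^k,\Delta^k)$, else form $m^{k+1}$ by making $m^k$ fully linear in $B(\theta^{k+1},\Delta^{k+1})$. Assumption A: the set $\mathcal{B}=\{z: \|z-\theta\|\le\Delta_{\max}\text{ for some }\theta\text{ with }f(\theta)\le f(\theta^0)\}$ is bounded, and $r$ is continuously differentiable on $\mathcal{B}$ with $\partial r$ Lipschitz continuous with constant $L_J$ on $\mathcal{B}$. Assumption B: for all $k$, $m^k(0)-m^k(s^k)\ge\frac12\|g^k\|\min\left(\Delta^k,\frac{\|g^k\|}{\|H^k\|+1}\right)$, and there is $\kappa_H\ge1$ with $\|H^k\|+1\le\kappa_H$ for all $k$. Constants: $c_0:=\min\left(\frac{1-\eta_2-2\eta_1'}{4\kappa_{\rm ef}},\frac{1}{\kappa_H}\right)$ and $\Delta_{\min}:=\gamma_{\rm dec}\min\left(\Delta^0,\frac{c_0\epsilon}{\kappa_{\rm eg}+1},\frac{\gamma_{\rm dec}\epsilon}{\kappa_{\rm eg}+1}\right)$. *)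

theory Defs
  imports "HOL-Analysis.Analysis"
begin

definition fobj :: "(real^'d \<Rightarrow> real^'n) \<Rightarrow> real^'d \<Rightarrow> real" where
  "fobj r \<theta> = (1 / real CARD('n)) * (norm (r \<theta>))\<^sup>2"

definition grad :: "(real^'d \<Rightarrow> real) \<Rightarrow> real^'d \<Rightarrow> real^'d" where
  "grad f x = (THE D. GDERIV f x :> D)"

text \<open>Model m(s) = (1/n) norm (r0 + J s)^2 built from residual value r0 = tilde r(theta^k) and J = J^k.\<close>
definition mval :: "real^'n \<Rightarrow> real^'d^'n \<Rightarrow> real^'d \<Rightarrow> real" where
  "mval r0 J s = (1 / real CARD('n)) * (norm (r0 + J *v s))\<^sup>2"

definition mgrad :: "real^'n \<Rightarrow> real^'d^'n \<Rightarrow> real^'d \<Rightarrow> real^'d" where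
  "mgrad r0 J s = (2 / real CARD('n)) *\<^sub>R (transpose J *v (r0 + J *v s))"

definition mg :: "real^'n \<Rightarrow> real^'d^'n \<Rightarrow> real^'d" where
  "mg r0 J = (2 / real CARD('n)) *\<^sub>R (transpose J *v r0)"

definition mH :: "real^'d^'n \<Rightarrow> real^'d^'d" where
  "mH J = (2 / real CARD('n)) *\<^sub>R (transpose J ** J)"

definition opnorm :: "real^'a^'b \<Rightarrow> real" where
  "opnorm A = onorm (\<lambda>v. A *v v)"

definition fully_linear ::
  "(real^'d \<Rightarrow> real^'n) \<Rightarrow> real \<Rightarrow> real \<Rightarrow> real^'n \<Rightarrow> real^'d^'n \<Rightarrow> real^'d \<Rightarrow> real \<Rightarrow> bool" where
  "fully_linear r kef keg r0 J \<theta> \<Delta> \<longleftrightarrow>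
     (\<forall>s. norm s \<le> \<Delta> \<longrightarrow>
        \<bar>fobj r (\<theta> + s) - mval r0 J s\<bar> \<le> kef * \<Delta>\<^sup>2 \<and>
        norm (grad (fobj r) (\<theta> + s) - mgrad r0 J s) \<le> keg * \<Delta>)"

definition c0_const :: "real \<Rightarrow> real \<Rightarrow> real \<Rightarrow> real \<Rightarrow> real" where
  "c0_const \<eta>2 \<eta>1' kef kH = min ((1 - \<eta>2 - 2 * \<eta>1') / (4 * kef)) (1 / kH)"

definition Delta_min ::
  "real \<Rightarrow> real \<Rightarrow> real \<Rightarrow> real \<Rightarrow> real \<Rightarrow> real \<Rightarrow> real \<Rightarrow> real \<Rightarrow> real" where
  "Delta_min \<gamma>dec \<Delta>0 \<eta>2 \<eta>1' kef keg kH \<epsilon> =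
     \<gamma>dec * min \<Delta>0 (min (c0_const \<eta>2 \<eta>1' kef kH * \<epsilon> / (keg + 1)) (\<gamma>dec * \<epsilon> / (keg + 1)))"

definition assumption_A :: "(real^'d \<Rightarrow> real^'n) \<Rightarrow> real^'d \<Rightarrow> real \<Rightarrow> bool" where
  "assumption_A r \<theta>0 \<Delta>max \<longleftrightarrow>
     (let B = {z. \<exists>\<theta>. fobj r \<theta> \<le> fobj r \<theta>0 \<and> norm (z - \<theta>) \<le> \<Delta>max} in
      bounded B \<and>
      (\<exists>Jr :: real^'d \<Rightarrow> real^'d^'n. \<exists>LJ.
          (\<forall>z\<in>B. (r has_derivative (\<lambda>h. Jr z *v h)) (at z)) \<and>
          continuous_on B Jr \<and>
          (\<forall>x\<in>B. \<forall>y\<in>B. opnorm (Jr x - Jr y) \<le> LJ * norm (x - y))))"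

end

theory Submission
  imports Defs
begin

theorem proposition1:
  fixes r :: "real^'d \<Rightarrow> real^'n"
    and \<theta>0 :: "real^'d"
    and \<Delta>0 \<Delta>max \<gamma>dec \<gamma>inc \<eta>1 \<eta>2 \<eta>1' \<epsilon> kef keg kH :: real
    and \<theta> :: "nat \<Rightarrow> real^'d"
    and \<Delta>init \<Delta> :: "nat \<Rightarrow> real"
    and icrit :: "nat \<Rightarrow> nat"
    and rt :: "nat \<Rightarrow> real^'n"
    and J :: "nat \<Rightarrow> real^'d^'n"
    and s :: "nat \<Rightarrow> real^'d"
    and rp :: "nat \<Rightarrow> real^'n"
    and \<rho> :: "nat \<Rightarrow> real"
    and k\<epsilon> :: nat
  assumes params: "\<Delta>max > 0" "0 < \<gamma>dec" "\<gamma>dec < 1" "1 < \<gamma>inc"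
      "0 < \<eta>1" "\<eta>1 \<le> \<eta>2" "\<eta>2 < 1" "0 < \<eta>1'" "\<eta>1' < min \<eta>1 (1 - \<eta>2) / 2"
      "\<epsilon> > 0" "kef > 0" "keg > 0" "0 < \<Delta>0" "\<Delta>0 \<le> \<Delta>max"
    and assmA: "assumption_A r \<theta>0 \<Delta>max"
    and init: "\<theta> 0 = \<theta>0" "\<Delta>init 0 = \<Delta>0"
    \<comment> \<open>criticality phase: the radius is shrunk icrit k times from its initial value;
        each shrink happens from a radius at which the model had been made fully linear
        but its model gradient was smaller than the radius\<close>
    and crit_shrink: "\<And>k. \<Delta> k = \<gamma>dec ^ icrit k * \<Delta>init k"
    and crit_fail: "\<And>k j. j < icrit k \<Longrightarrow>
        \<exists>r0 J'. fully_linear r kef keg r0 J' (\<theta> k) (\<gamma>dec ^ j * \<Delta>init k)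
               \<and> norm (mg r0 J') < \<gamma>dec ^ j * \<Delta>init k"
    and crit_post: "\<And>k. norm (mg (rt k) (J k)) \<le> \<epsilon> \<Longrightarrow>
        fully_linear r kef keg (rt k) (J k) (\<theta> k) (\<Delta> k) \<and> \<Delta> k \<le> norm (mg (rt k) (J k))"
    and step_bound: "\<And>k. norm (s k) \<le> \<Delta> k"
    \<comment> \<open>accuracy of tilde f(theta^k) = m^k(0) and of tilde f(theta^k + s^k)\<close>
    and acc: "\<And>k. \<bar>mval (rt k) (J k) 0 - fobj r (\<theta> k)\<bar>
                 \<le> \<eta>1' * (mval (rt k) (J k) 0 - mval (rt k) (J k) (s k))"
    and acc_plus: "\<And>k. \<bar>(1 / real CARD('n)) * (norm (rp k))\<^sup>2 - fobj r (\<theta> k + s k)\<bar>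
                 \<le> \<eta>1' * (mval (rt k) (J k) 0 - mval (rt k) (J k) (s k))"
    and rho_def: "\<And>k. \<rho> k = (mval (rt k) (J k) 0 - (1 / real CARD('n)) * (norm (rp k))\<^sup>2)
                          / (mval (rt k) (J k) 0 - mval (rt k) (J k) (s k))"
    \<comment> \<open>Assumption B\<close>
    and assmB1: "\<And>k. mval (rt k) (J k) 0 - mval (rt k) (J k) (s k)
        \<ge> 1/2 * norm (mg (rt k) (J k))
             * min (\<Delta> k) (norm (mg (rt k) (J k)) / (opnorm (mH (J k)) + 1))"
    and assmB2: "kH \<ge> 1" "\<And>k. opnorm (mH (J k)) + 1 \<le> kH"
    \<comment> \<open>step 3: iterate and radius updates\<close>
    and theta_upd: "\<And>k. \<theta> (Suc k) =
        (if \<rho> k \<ge> \<eta>2 \<or> (\<rho> k \<ge> \<eta>1 \<and> fully_linear r kef keg (rt k) (J k) (\<theta> k) (\<Delta> k))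
         then \<theta> k + s k else \<theta> k)"
    and Delta_upd: "\<And>k. \<Delta>init (Suc k) =
        (if \<rho> k \<ge> \<eta>2 then min (\<gamma>inc * \<Delta> k) \<Delta>max
         else if \<not> fully_linear r kef keg (rt k) (J k) (\<theta> k) (\<Delta> k) then \<Delta> k
         else \<gamma>dec * \<Delta> k)"
    and keps: "\<And>k. k \<le> k\<epsilon> \<Longrightarrow> norm (grad (fobj r) (\<theta> k)) \<ge> \<epsilon>"
              "norm (grad (fobj r) (\<theta> (Suc k\<epsilon>))) < \<epsilon>"
  shows "real (card {k. k \<le> k\<epsilon> \<and>
              (\<rho> k \<ge> \<eta>2 \<or> (\<rho> k \<ge> \<eta>1 \<and> fully_linear r kef keg (rt k) (J k) (\<theta> k) (\<Delta> k)))})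
         \<le> 2 * (keg + 1) * fobj r \<theta>0
            / ((\<eta>1 - 2 * \<eta>1') * \<epsilon> * Delta_min \<gamma>dec \<Delta>0 \<eta>2 \<eta>1' kef keg kH \<epsilon>)"
proof -
  note p = params
  define D where "D = (\<lambda>k. mval (rt k) (J k) 0 - mval (rt k) (J k) (s k))"
  define g where "g = (\<lambda>k. norm (mg (rt k) (J k)))"
  define F where "F = (\<lambda>k. fobj r (\<theta> k))"
  define c0 where "c0 = c0_const \<eta>2 \<eta>1' kef kH"
  define L where "L = min \<Delta>0 (min (c0 * \<epsilon> / (keg + 1)) (\<gamma>dec * \<epsilon> / (keg + 1)))"
  define succ where "succ = (\<lambda>k. \<rho> k \<ge> \<eta>2 \<or> (\<rho> k \<ge> \<eta>1 \<and> fully_linear r kef keg (rt k) (J k) (\<theta> k) (\<Delta> k)))"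
  have Dmin: "Delta_min \<gamma>dec \<Delta>0 \<eta>2 \<eta>1' kef keg kH \<epsilon> = \<gamma>dec * L"
    by (simp add: Delta_min_def L_def c0_def)
  have eta1': "\<eta>1' < \<eta>1 / 2" "\<eta>1' < (1 - \<eta>2) / 2" using p(9) by auto
  have D_nonneg: "D k \<ge> 0" for k
  proof -
    have "0 \<le> \<eta>1' * D k" using acc[of k] unfolding D_def by (meson abs_ge_zero order_trans)
    then show ?thesis using p(8) by (simp add: zero_le_mult_iff)
  qed
  have opn: "opnorm (mH (J k)) \<ge> 0" for k
    unfolding opnorm_def by (rule onorm_pos_le) (rule matrix_vector_mul_bounded_linear)
  have keg1: "keg + 1 > 0" using p(12) by simp
  have X: "1 - \<eta>2 - 2 * \<eta>1' > 0" using eta1' by simp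
  have c0pos: "c0 > 0" using X p(11) assmB2(1) by (simp add: c0_def c0_const_def)
  have c0le1: "c0 \<le> 1 / kH" by (simp add: c0_def c0_const_def)
  have c0le2: "c0 \<le> (1 - \<eta>2 - 2 * \<eta>1') / (4 * kef)" by (simp add: c0_def c0_const_def)
  have kefc0: "kef * c0 \<le> (1 - \<eta>2 - 2 * \<eta>1') / 4"
    using c0le2 p(11) by (simp add: field_simps)
  have kHc0: "kH * c0 \<le> 1" using c0le1 assmB2(1) by (simp add: field_simps)
  have Lpos: "L > 0" using p c0pos keg1 by (simp add: L_def)
  have L1: "L \<le> \<Delta>0" and L2: "L \<le> c0 * \<epsilon> / (keg + 1)" and L3: "L \<le> \<gamma>dec * \<epsilon> / (keg + 1)"
    by (simp_all add: L_def)
  have gL: "\<gamma>dec * L \<le> L" using Lpos p(3) by simp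
  have Dpos: "\<Delta>init k > 0 \<and> \<Delta> k > 0" for k
  proof (induction k)
    case 0 then show ?case using init p(2,13) crit_shrink[of 0] by simp
  next
    case (Suc k)
    have "\<Delta>init (Suc k) > 0" using Suc p Delta_upd[of k] by auto
    then show ?case using crit_shrink[of "Suc k"] p(2) by simp
  qed
  have FLgrad: "norm (grad (fobj r) th) \<le> norm (mg r0 J') + keg * d"
    if "fully_linear r kef keg r0 J' th d" "d \<ge> 0" for r0 J' th d
  proof -
    have "norm (grad (fobj r) (th + 0) - mgrad r0 J' 0) \<le> keg * d"
      using that unfolding fully_linear_def by (metis norm_zero)
    moreover have "mgrad r0 J' 0 = mg r0 J'" by (simp add: mgrad_def mg_def)
    ultimately show ?thesis by (metis add.right_neutral norm_triangle_sub add_le_cancel_left order_trans add.commute)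
  qed
  have gbound: "g k \<ge> \<epsilon> / (keg + 1)" if "k \<le> k\<epsilon>" for k
  proof (cases "g k \<le> \<epsilon>")
    case True
    then have fl: "fully_linear r kef keg (rt k) (J k) (\<theta> k) (\<Delta> k)" and le: "\<Delta> k \<le> g k"
      using crit_post[of k] by (auto simp: g_def)
    have "\<epsilon> \<le> g k + keg * \<Delta> k" using FLgrad[OF fl] Dpos[of k] keps(1)[OF that] by (simp add: g_def)
    also have "\<dots> \<le> g k + keg * g k" using le p(12) by simp
    finally have "\<epsilon> \<le> (keg + 1) * g k" by (simp add: algebra_simps)
    then show ?thesis using keg1 by (simp add: field_simps)
  next
    case False
    have "\<epsilon> / (keg + 1) \<le> \<epsilon>" using p(10,12) by (simp add: field_simps)
    then show ?thesis using False by simp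
  qed
  have crit_lb: "\<Delta> k \<ge> \<gamma>dec * \<epsilon> / (keg + 1)" if "k \<le> k\<epsilon>" "0 < icrit k" for k
  proof -
    define j where "j = icrit k - 1"
    have j: "j < icrit k" "icrit k = Suc j" using that(2) by (auto simp: j_def)
    obtain r0 J' where fl: "fully_linear r kef keg r0 J' (\<theta> k) (\<gamma>dec ^ j * \<Delta>init k)"
      and lt: "norm (mg r0 J') < \<gamma>dec ^ j * \<Delta>init k" using crit_fail[OF j(1)] by blast
    have nn: "\<gamma>dec ^ j * \<Delta>init k \<ge> 0" using Dpos[of k] p(2) by simp
    have "\<epsilon> \<le> norm (mg r0 J') + keg * (\<gamma>dec ^ j * \<Delta>init k)"
      using FLgrad[OF fl nn] keps(1)[OF that(1)] by simp
    also have "\<dots> \<le> (keg + 1) * (\<gamma>dec ^ j * \<Delta>init k)" using lt by (simp add: algebra_simps)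
    finally have "\<epsilon> / (keg + 1) \<le> \<gamma>dec ^ j * \<Delta>init k" using keg1 by (simp add: field_simps)
    then have "\<gamma>dec * (\<epsilon> / (keg + 1)) \<le> \<gamma>dec * (\<gamma>dec ^ j * \<Delta>init k)"
      using p(2) by (intro mult_left_mono) auto
    then show ?thesis using crit_shrink[of k] j(2) by simp
  qed
  have D_ge: "\<Delta> k \<ge> min (\<Delta>init k) (\<gamma>dec * L)" if "k \<le> k\<epsilon>" for k
  proof (cases "icrit k = 0")
    case True then show ?thesis using crit_shrink[of k] by simp
  next
    case False
    have "\<gamma>dec * L \<le> \<gamma>dec * \<epsilon> / (keg + 1)" using gL L3 by simp
    then show ?thesis using crit_lb[OF that] False by simp
  qed
  have vsucc: "\<rho> k \<ge> \<eta>2" if "k \<le> k\<epsilon>" "fully_linear r kef keg (rt k) (J k) (\<theta> k) (\<Delta> k)"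
     "\<Delta> k < c0 * \<epsilon> / (keg + 1)" for k
  proof -
    let ?m0 = "mval (rt k) (J k) 0" and ?ms = "mval (rt k) (J k) (s k)"
    let ?fp = "(1 / real CARD('n)) * (norm (rp k))\<^sup>2" and ?fs = "fobj r (\<theta> k + s k)"
    have Dk: "\<Delta> k > 0" using Dpos by blast
    have gk: "g k \<ge> \<epsilon> / (keg + 1)" using gbound[OF that(1)] .
    have c0g: "c0 * \<epsilon> / (keg + 1) \<le> c0 * g k" using mult_left_mono[OF gk, of c0] c0pos by simp
    have Dlt: "\<Delta> k \<le> c0 * g k" using that(3) c0g by simp
    have gpos: "g k > 0" using gk p(10) keg1 by (smt (verit) divide_pos_pos)
    have "c0 * g k \<le> g k / kH" using c0le1 gpos assmB2(1) by (simp add: field_simps)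
    also have "\<dots> \<le> g k / (opnorm (mH (J k)) + 1)"
      using assmB2(2)[of k] opn[of k] gpos by (simp add: frac_le)
    finally have "min (\<Delta> k) (g k / (opnorm (mH (J k)) + 1)) = \<Delta> k" using Dlt by simp
    then have DB: "D k \<ge> 1/2 * g k * \<Delta> k" using assmB1[of k] by (simp add: D_def g_def)
    have "1/2 * g k * \<Delta> k > 0" using gpos Dk by simp
    then have Dkpos: "D k > 0" using DB by linarith
    have fl: "\<bar>?fs - ?ms\<bar> \<le> kef * (\<Delta> k)\<^sup>2"
      using that(2) step_bound[of k] unfolding fully_linear_def by blast
    have ap: "\<bar>?fp - ?fs\<bar> \<le> \<eta>1' * D k" using acc_plus[of k] by (simp add: D_def)
    have "(\<Delta> k)\<^sup>2 \<le> \<Delta> k * (c0 * g k)" using Dlt Dk by (simp add: power2_eq_square)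
    then have "kef * (\<Delta> k)\<^sup>2 \<le> kef * (\<Delta> k * (c0 * g k))" using p(11) by (simp add: mult_left_mono)
    also have "\<dots> = (kef * c0) * (g k * \<Delta> k)" by (simp add: algebra_simps)
    also have "\<dots> \<le> ((1 - \<eta>2 - 2 * \<eta>1') / 4) * (g k * \<Delta> k)"
      using kefc0 gpos Dk by (simp add: mult_right_mono)
    also have "\<dots> \<le> ((1 - \<eta>2 - 2 * \<eta>1') / 2) * D k" using mult_left_mono[OF DB, of "(1 - \<eta>2 - 2 * \<eta>1') / 2"] X by (simp add: algebra_simps)
    finally have kb: "kef * (\<Delta> k)\<^sup>2 \<le> ((1 - \<eta>2 - 2 * \<eta>1') / 2) * D k" .
    have "?m0 - ?fp \<ge> \<eta>2 * D k"
    proof -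
      have "?m0 - ?fp = D k + (?ms - ?fs) + (?fs - ?fp)" by (simp add: D_def)
      moreover have "?ms - ?fs \<ge> - (kef * (\<Delta> k)\<^sup>2)" using fl by linarith
      moreover have "?fs - ?fp \<ge> - (\<eta>1' * D k)" using ap by linarith
      ultimately have "?m0 - ?fp \<ge> D k - ((1 - \<eta>2 - 2 * \<eta>1') / 2) * D k - \<eta>1' * D k" using kb by linarith
      moreover have "D k - ((1 - \<eta>2 - 2 * \<eta>1') / 2) * D k - \<eta>1' * D k = ((1 + \<eta>2)/2) * D k"
        by (simp add: field_simps)
      moreover have "((1 + \<eta>2)/2) * D k \<ge> \<eta>2 * D k" using p(7) Dkpos by (simp add: mult_right_mono)
      ultimately show ?thesis by linarith
    qed
    then have "\<eta>2 \<le> (?m0 - ?fp) / D k" using Dkpos by (simp add: pos_le_divide_eq)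
    then show ?thesis using rho_def[of k] by (simp add: D_def)
  qed
  have inv: "\<Delta>init k \<ge> \<gamma>dec * L" if "k \<le> Suc k\<epsilon>" for k
    using that
  proof (induction k)
    case 0 then show ?case using init gL L1 by simp
  next
    case (Suc k)
    then have k: "k \<le> k\<epsilon>" by simp
    have Dk: "\<Delta> k \<ge> \<gamma>dec * L" using D_ge[OF k] Suc by simp
    have mx: "\<Delta>max \<ge> \<gamma>dec * L" using gL L1 p(14) by simp
    show ?case
    proof (cases "\<rho> k \<ge> \<eta>2")
      case True
      have "\<gamma>inc * \<Delta> k \<ge> \<Delta> k" using p(4) Dpos[of k] by simp
      then show ?thesis using True Delta_upd[of k] Dk mx by simp
    next
      case nr: False
      show ?thesis
      proof (cases "fully_linear r kef keg (rt k) (J k) (\<theta> k) (\<Delta> k)")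
        case False then show ?thesis using nr Delta_upd[of k] Dk by simp
      next
        case True
        have "\<Delta> k \<ge> c0 * \<epsilon> / (keg + 1)" using vsucc[OF k True] nr by linarith
        then have "\<Delta> k \<ge> L" using L2 by simp
        then have "\<gamma>dec * \<Delta> k \<ge> \<gamma>dec * L" using p(2) by simp
        then show ?thesis using nr True Delta_upd[of k] by simp
      qed
    qed
  qed
  have Dmk: "\<Delta> k \<ge> \<gamma>dec * L" if "k \<le> k\<epsilon>" for k
    using D_ge[OF that] inv[of k] that by simp
  have etad: "\<eta>1 - 2 * \<eta>1' > 0" using eta1' by simp
  have decr0: "F k - F (Suc k) \<ge> (\<eta>1 - 2 * \<eta>1') * D k" if "succ k" for k
  proof -
    have r1: "\<rho> k \<ge> \<eta>1" using that p(6) by (auto simp: succ_def)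
    have Dkpos: "D k > 0"
    proof (rule ccontr)
      assume "\<not> D k > 0"
      then have "D k = 0" using D_nonneg[of k] by simp
      then have "\<rho> k = 0" using rho_def[of k] by (simp add: D_def)
      then show False using r1 p(5) by simp
    qed
    let ?m0 = "mval (rt k) (J k) 0"
    let ?fp = "(1 / real CARD('n)) * (norm (rp k))\<^sup>2" and ?fs = "fobj r (\<theta> k + s k)"
    have "\<rho> k * D k = ?m0 - ?fp" using rho_def[of k] Dkpos by (simp add: D_def)
    moreover have "\<eta>1 * D k \<le> \<rho> k * D k" using r1 Dkpos by (simp add: mult_right_mono)
    moreover have "\<bar>?m0 - F k\<bar> \<le> \<eta>1' * D k" using acc[of k] by (simp add: D_def F_def)
    moreover have "\<bar>?fp - ?fs\<bar> \<le> \<eta>1' * D k" using acc_plus[of k] by (simp add: D_def)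
    moreover have "F (Suc k) = ?fs" using theta_upd[of k] that by (simp add: F_def succ_def)
    ultimately show ?thesis by (simp add: algebra_simps abs_le_iff)
  qed
  have mono: "F (Suc k) \<le> F k" for k
  proof (cases "succ k")
    case True then show ?thesis using decr0[of k] etad D_nonneg[of k]
      by (smt (verit) mult_nonneg_nonneg)
  next
    case False then show ?thesis using theta_upd[of k] by (auto simp: F_def succ_def)
  qed
  define cc where "cc = (\<eta>1 - 2 * \<eta>1') * (1/2 * (\<epsilon> / (keg + 1)) * (\<gamma>dec * L))"
  have ccpos: "cc > 0" unfolding cc_def using etad p(2,10) keg1 Lpos by simp
  have decr: "F k - F (Suc k) \<ge> cc" if "k \<le> k\<epsilon>" "succ k" for k
  proof -
    have gk: "g k \<ge> \<epsilon> / (keg + 1)" using gbound[OF that(1)] .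
    have ge0: "\<epsilon> / (keg + 1) > 0" using p(10) keg1 by simp
    have Dk: "\<Delta> k \<ge> \<gamma>dec * L" using Dmk[OF that(1)] .
    have "\<gamma>dec * L \<le> L" using gL .
    also have "L \<le> c0 * \<epsilon> / (keg + 1)" using L2 .
    also have "\<dots> = (\<epsilon> / (keg + 1)) * c0" by simp
    also have "\<dots> \<le> (\<epsilon> / (keg + 1)) * (1 / kH)" using c0le1 ge0 by (intro mult_left_mono) auto
    also have "\<dots> = (\<epsilon> / (keg + 1)) / kH" by simp
    also have "\<dots> \<le> g k / kH" using divide_right_mono[OF gk, of kH] assmB2(1) by simp
    also have "\<dots> \<le> g k / (opnorm (mH (J k)) + 1)"
      using assmB2(2)[of k] opn[of k] gk ge0 by (simp add: frac_le)
    finally have m: "min (\<Delta> k) (g k / (opnorm (mH (J k)) + 1)) \<ge> \<gamma>dec * L" using Dk by simp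
    have "1/2 * (\<epsilon> / (keg + 1)) * (\<gamma>dec * L) \<le> 1/2 * g k * min (\<Delta> k) (g k / (opnorm (mH (J k)) + 1))"
      using gk m ge0 gL Lpos p(2) by (intro mult_mono) auto
    also have "\<dots> \<le> D k" using assmB1[of k] by (simp add: D_def g_def)
    finally have "cc \<le> (\<eta>1 - 2 * \<eta>1') * D k" unfolding cc_def using etad by (intro mult_left_mono) auto
    then show ?thesis using decr0[OF that(2)] by simp
  qed
  define S where "S = {k. k \<le> k\<epsilon> \<and> succ k}"
  have finS: "finite S" unfolding S_def by simp
  have SS: "S \<subseteq> {..k\<epsilon>}" unfolding S_def by auto
  have "real (card S) * cc = (\<Sum>k\<in>S. cc)" by simp
  also have "\<dots> \<le> (\<Sum>k\<in>S. F k - F (Suc k))" using decr by (intro sum_mono) (auto simp: S_def)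
  also have "\<dots> \<le> (\<Sum>k\<in>{..k\<epsilon>}. F k - F (Suc k))"
    using SS mono by (intro sum_mono2) auto
  also have "\<dots> = F 0 - F (Suc k\<epsilon>)" by (rule sum_telescope)
  also have "\<dots> \<le> F 0" by (simp add: F_def fobj_def)
  finally have cs: "real (card S) * cc \<le> fobj r \<theta>0" by (simp add: F_def init)
  have eq: "2 * (keg + 1) * fobj r \<theta>0 / ((\<eta>1 - 2 * \<eta>1') * \<epsilon> * Delta_min \<gamma>dec \<Delta>0 \<eta>2 \<eta>1' kef keg kH \<epsilon>)
     = fobj r \<theta>0 / cc" unfolding Dmin cc_def using keg1 by (simp add: field_simps)
  show ?thesis unfolding eq using cs ccpos
    by (simp add: S_def succ_def pos_le_divide_eq)
qed

end
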